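(* Let $X$ be a finite set, $F_X,F'_X$ filtrations over $X$ with facegrams $C_X,C'_X$. Then $$d_{\mathrm{B}}(\mathbf{mgm}(F_X),\mathbf{mgm}(F'_X))\leq d_\infty(\mathbf{mgm}^*(C_X),\mathbf{mgm}^*(C'_X))\leq d_{\mathrm{I}}(C_X,C'_X)=d_{\mathrm{I}}(F_X,F'_X).$$
   Context: $\mathbf{pow}(X)$: nonempty subsets of $X$. Filtration: order-preserving $F_X:(\mathbf{pow}(X),\subset)\to(\mathbb{R},\leq)$. Its facegram: $C_X(t)$ = inclusion-maximal elements of $\{\sigma\mid F_X(\sigma)\leq t\}$. Face-sets are ordered by $\mathcal{S}\leq\mathcal{S}'$ iff each member of $\mathcal{S}$ lies in a member of $\mathcal{S}'$. Lifespan $I_\sigma:=\{t\mid\sigma\in C_X(t)\}$, which is empty or of the form $[a,b)$, $a\in\mathbb{R}$, $b\in\mathbb{R}\cup\{\infty\}$. $\mathbf{mgm}$ is the multiset of nonempty lifespans (one per $\sigma$); $\mathbf{mgm}^*(C_X)=\{(\sigma,I_\sigma)\mid I_\sigma\neq\emptyset\}$. Bottleneck distance between multisets $A,B$ of intervals $[a,b)$: an $\varepsilon$-matching is a bijection $\varphi:A'\to B'$ between sub-multisets with $\max(|a-c|,|b-d|)\leq\varepsilon$ whenever $\varphi([a,b))=[c,d)$ (using $|\infty-\infty|=0$), and $|b-a|\leq2\varepsilon$ for every unmatched $[a,b)$; $d_{\mathrm{B}}(A,B)$ is the infimum of such $\varepsilon$. $d_\infty(\mathbf{mgm}^*(C_X),\mathbf{mgm}^*(C'_X)):=\max_{\sigma\in\mathbf{pow}(X)}d_{\mathrm{B}}(I^{C_X}_\sigma,I^{C'_X}_\sigma)$,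 each lifespan viewed as a multiset with zero or one interval. $d_{\mathrm{I}}(C_X,C'_X):=\inf\{\varepsilon\geq0\mid C_X(t)\leq C'_X(t+\varepsilon),\ C'_X(t)\leq C_X(t+\varepsilon)\ \forall t\}$; $d_{\mathrm{I}}(F_X,F'_X):=\max_{\sigma}|F_X(\sigma)-F'_X(\sigma)|$. *)

theory Defs
  imports "HOL-Analysis.Analysis" "HOL-Library.Multiset"
begin

definition pow :: "'a set \<Rightarrow> 'a set set" where
  "pow X = {\<sigma>. \<sigma> \<subseteq> X \<and> \<sigma> \<noteq> {}}"

definition filtration :: "'a set \<Rightarrow> ('a set \<Rightarrow> real) \<Rightarrow> bool" where
  "filtration X F \<longleftrightarrow> (\<forall>\<sigma>\<in>pow X. \<forall>\<tau>\<in>pow X. \<sigma> \<subseteq> \<tau> \<longrightarrow> F \<sigma> \<le> F \<tau>)"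

definition facegram :: "'a set \<Rightarrow> ('a set \<Rightarrow> real) \<Rightarrow> real \<Rightarrow> 'a set set" where
  "facegram X F t =
     {\<sigma> \<in> pow X. F \<sigma> \<le> t \<and> \<not> (\<exists>\<tau>\<in>pow X. F \<tau> \<le> t \<and> \<sigma> \<subset> \<tau>)}"

definition faceset_le :: "'a set set \<Rightarrow> 'a set set \<Rightarrow> bool" where
  "faceset_le S S' \<longleftrightarrow> (\<forall>\<sigma>\<in>S. \<exists>\<tau>\<in>S'. \<sigma> \<subseteq> \<tau>)"

definition lifespan :: "(real \<Rightarrow> 'a set set) \<Rightarrow> 'a set \<Rightarrow> real set" where
  "lifespan C \<sigma> = {t. \<sigma> \<in> C t}"

text \<open>An interval [a,b) with a real and b in R \<union> {\<infinity>} is represented by the pair (a,b).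
  A nonempty lifespan (which is of the form [a,b)) is converted to its endpoints.\<close>
type_synonym interval = "real \<times> ereal"

definition to_interval :: "real set \<Rightarrow> interval" where
  "to_interval I = (Inf I, if bdd_above I then ereal (Sup I) else \<infinity>)"

definition lifespan_mset :: "(real \<Rightarrow> 'a set set) \<Rightarrow> 'a set \<Rightarrow> interval multiset" where
  "lifespan_mset C \<sigma> = (if lifespan C \<sigma> = {} then {#} else {# to_interval (lifespan C \<sigma>) #})"

definition mgm :: "'a set \<Rightarrow> ('a set \<Rightarrow> real) \<Rightarrow> interval multiset" where
  "mgm X F = image_mset (\<lambda>\<sigma>. to_interval (lifespan (facegram X F) \<sigma>))
      (mset_set {\<sigma> \<in> pow X. lifespan (facegram X F) \<sigma> \<noteq> {}})"

definition end_dist :: "ereal \<Rightarrow> ereal \<Rightarrow> ereal" where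
  "end_dist b d = (if b = \<infinity> \<and> d = \<infinity> then 0
                  else if b = \<infinity> \<or> d = \<infinity> then \<infinity> else \<bar>b - d\<bar>)"

text \<open>An \<epsilon>-matching between A and B, encoded as a multiset M of matched pairs
  (a bijection between the sub-multisets image fst M of A and image snd M of B).\<close>
definition eps_matching :: "real \<Rightarrow> interval multiset \<Rightarrow> interval multiset \<Rightarrow> (interval \<times> interval) multiset \<Rightarrow> bool" where
  "eps_matching \<epsilon> A B M \<longleftrightarrow>
     image_mset fst M \<subseteq># A \<and> image_mset snd M \<subseteq># B \<and>
     (\<forall>p \<in># M. \<bar>fst (fst p) - fst (snd p)\<bar> \<le> \<epsilon> \<and> end_dist (snd (fst p)) (snd (snd p)) \<le> ereal \<epsilon>) \<and>
     (\<forall>i \<in># A - image_mset fst M. \<bar>snd i - ereal (fst i)\<bar> \<le> ereal (2 * \<epsilon>)) \<and>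
     (\<forall>i \<in># B - image_mset snd M. \<bar>snd i - ereal (fst i)\<bar> \<le> ereal (2 * \<epsilon>))"

text \<open>Bottleneck distance (infimum over \<epsilon> \<ge> 0; \<infinity> if no matching exists).\<close>
definition bottleneck :: "interval multiset \<Rightarrow> interval multiset \<Rightarrow> ereal" where
  "bottleneck A B = Inf {ereal \<epsilon> | \<epsilon>. \<epsilon> \<ge> 0 \<and> (\<exists>M. eps_matching \<epsilon> A B M)}"

text \<open>d_\<infinity> between the labelled merge grams mgm^*(C) and mgm^*(C'):
  maximum over faces of the bottleneck distance of the lifespans
  (with the convention that the maximum over the empty set is 0).\<close>
definition d_inf_mgm_star :: "'a set \<Rightarrow> (real \<Rightarrow> 'a set set) \<Rightarrow> (real \<Rightarrow> 'a set set) \<Rightarrow> ereal" where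
  "d_inf_mgm_star X C C' =
     Sup (insert 0 ((\<lambda>\<sigma>. bottleneck (lifespan_mset C \<sigma>) (lifespan_mset C' \<sigma>)) ` pow X))"

definition d_I_facegram :: "(real \<Rightarrow> 'a set set) \<Rightarrow> (real \<Rightarrow> 'a set set) \<Rightarrow> ereal" where
  "d_I_facegram C C' = Inf {ereal \<epsilon> | \<epsilon>. \<epsilon> \<ge> 0 \<and>
      (\<forall>t. faceset_le (C t) (C' (t + \<epsilon>)) \<and> faceset_le (C' t) (C (t + \<epsilon>)))}"

definition d_I_filtration :: "'a set \<Rightarrow> ('a set \<Rightarrow> real) \<Rightarrow> ('a set \<Rightarrow> real) \<Rightarrow> real" where
  "d_I_filtration X F F' = Max (insert 0 ((\<lambda>\<sigma>. \<bar>F \<sigma> - F' \<sigma>\<bar>) ` pow X))"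

end

theory Submission
  imports Defs
begin

lemma finite_pow: "finite X \<Longrightarrow> finite (pow X)"
  unfolding pow_def by (rule finite_subset[of _ "Pow X"]) auto

lemma eps_matching_mono:
  "eps_matching e A B M \<Longrightarrow> e \<le> e' \<Longrightarrow> eps_matching e' A B M"
  unfolding eps_matching_def
  by (smt (verit, ccfv_SIG) ereal_less_eq(3) order_trans)

lemma mset_diff_add:
  fixes A1 A2 C1 C2 :: "'b multiset"
  assumes "C1 \<subseteq># A1" "C2 \<subseteq># A2"
  shows "(A1 + A2) - (C1 + C2) = (A1 - C1) + (A2 - C2)"
  using assms by (simp add: multiset_eq_iff subseteq_mset_def)

lemma eps_matching_add:
  assumes "eps_matching e A1 B1 M1" "eps_matching e A2 B2 M2"
  shows "eps_matching e (A1 + A2) (B1 + B2) (M1 + M2)"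
proof -
  have s: "image_mset fst M1 \<subseteq># A1" "image_mset fst M2 \<subseteq># A2"
       "image_mset snd M1 \<subseteq># B1" "image_mset snd M2 \<subseteq># B2"
    using assms unfolding eps_matching_def by auto
  have e1: "(A1 + A2) - image_mset fst (M1 + M2) = (A1 - image_mset fst M1) + (A2 - image_mset fst M2)"
    using mset_diff_add[OF s(1,2)] by simp
  have e2: "(B1 + B2) - image_mset snd (M1 + M2) = (B1 - image_mset snd M1) + (B2 - image_mset snd M2)"
    using mset_diff_add[OF s(3,4)] by simp
  have i1: "image_mset fst (M1 + M2) \<subseteq># A1 + A2" using s(1,2) by (simp add: subset_mset.add_mono)
  have i2: "image_mset snd (M1 + M2) \<subseteq># B1 + B2" using s(3,4) by (simp add: subset_mset.add_mono)
  show ?thesis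
    unfolding eps_matching_def e1 e2
    using i1 i2 assms unfolding eps_matching_def union_iff
    by (metis set_mset_union Un_iff)
qed

lemma eps_matching_empty: "eps_matching e {#} {#} {#}"
  unfolding eps_matching_def by auto

lemma eps_matching_sum:
  "finite S \<Longrightarrow> (\<forall>s\<in>S. eps_matching e (A s) (B s) (M s)) \<Longrightarrow>
     eps_matching e (\<Sum>s\<in>S. A s) (\<Sum>s\<in>S. B s) (\<Sum>s\<in>S. M s)"
  by (induction S rule: finite_induct) (auto simp: eps_matching_empty intro: eps_matching_add)

lemma image_mset_mset_set: "finite A \<Longrightarrow> image_mset f (mset_set A) = (\<Sum>x\<in>A. {#f x#})"
  by (induction A rule: finite_induct) auto

lemma mgm_sum: "finite X \<Longrightarrow> mgm X F = (\<Sum>\<sigma>\<in>pow X. lifespan_mset (facegram X F) \<sigma>)"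
  unfolding mgm_def lifespan_mset_def
  apply (subst image_mset_mset_set)
   apply (simp add: finite_pow)
  apply (subst sum.inter_filter)
   apply (simp add: finite_pow)
  apply (rule sum.cong; auto)
  done

lemma bottleneck_le:
  assumes "0 \<le> x" "\<And>e. x < ereal e \<Longrightarrow> \<exists>M. eps_matching e A B M"
  shows "bottleneck A B \<le> x"
  unfolding bottleneck_def Inf_le_iff
proof (intro allI impI)
  fix y :: ereal assume "x < y"
  then obtain z where z: "x < z" "z < y" using dense by blast
  then obtain e where ze: "z = ereal e" using assms(1)
    by (cases z) auto
  have "0 < ereal e" using z ze assms(1) by order
  then have "e \<ge> 0" by simp
  with assms(2)[of e] z ze show "\<exists>s\<in>{ereal \<epsilon> |\<epsilon>. 0 \<le> \<epsilon> \<and> (\<exists>M. eps_matching \<epsilon> A B M)}. s < y"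
    by auto
qed

lemma bottleneck_less:
  assumes "bottleneck A B < ereal e"
  shows "\<exists>M. eps_matching e A B M"
proof -
  from assms obtain s where "s \<in> {ereal \<epsilon> |\<epsilon>. 0 \<le> \<epsilon> \<and> (\<exists>M. eps_matching \<epsilon> A B M)}" "s < ereal e"
    unfolding bottleneck_def Inf_less_iff by blast
  then obtain e' M where "eps_matching e' A B M" "e' < e" by auto
  then show ?thesis using eps_matching_mono by (meson less_imp_le)
qed

lemma bottleneck_le_match:
  assumes "eps_matching e A B M" "e \<ge> 0"
  shows "bottleneck A B \<le> ereal e"
  unfolding bottleneck_def using assms by (auto intro!: Inf_lower)

lemma exists_maximal:
  assumes "finite X" "\<sigma> \<in> pow X" "F \<sigma> \<le> s"
  shows "\<exists>\<tau>\<in>facegram X F s. \<sigma> \<subseteq> \<tau>"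
proof -
  let ?A = "{\<tau>\<in>pow X. F \<tau> \<le> s \<and> \<sigma> \<subseteq> \<tau>}"
  have "finite ?A" using finite_pow[OF assms(1)] by auto
  moreover have "?A \<noteq> {}" using assms by auto
  ultimately obtain m where m: "m \<in> ?A" "\<forall>b\<in>?A. m \<le> b \<longrightarrow> m = b"
    using finite_has_maximal by blast
  have "m \<in> facegram X F s"
    unfolding facegram_def using m by auto
  then show ?thesis using m by auto
qed

definition interl where
  "interl X F F' e \<longleftrightarrow> (\<forall>t. faceset_le (facegram X F t) (facegram X F' (t + e)) \<and>
      faceset_le (facegram X F' t) (facegram X F (t + e)))"

lemma interl_half:
  assumes "finite X" "\<forall>\<sigma>\<in>pow X. F' \<sigma> \<le> F \<sigma> + e"
  shows "faceset_le (facegram X F t) (facegram X F' (t + e))"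
  unfolding faceset_le_def
proof
  fix \<sigma> assume "\<sigma> \<in> facegram X F t"
  then have "\<sigma> \<in> pow X" "F \<sigma> \<le> t" unfolding facegram_def by auto
  then have "F' \<sigma> \<le> t + e" using assms(2) by force
  then show "\<exists>\<tau>\<in>facegram X F' (t + e). \<sigma> \<subseteq> \<tau>"
    using exists_maximal[OF assms(1) \<open>\<sigma> \<in> pow X\<close>] by blast
qed

lemma interl_half_conv:
  assumes "finite X" "filtration X F'" "\<forall>t. faceset_le (facegram X F t) (facegram X F' (t + e))"
    "\<sigma> \<in> pow X"
  shows "F' \<sigma> \<le> F \<sigma> + e"
proof -
  obtain \<rho> where \<rho>: "\<rho> \<in> facegram X F (F \<sigma>)" "\<sigma> \<subseteq> \<rho>"
    using exists_maximal[OF assms(1,4), of F "F \<sigma>"] by auto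
  then obtain \<tau> where \<tau>: "\<tau> \<in> facegram X F' (F \<sigma> + e)" "\<rho> \<subseteq> \<tau>"
    using assms(3) unfolding faceset_le_def by blast
  then have "\<tau> \<in> pow X" "F' \<tau> \<le> F \<sigma> + e" unfolding facegram_def by auto
  moreover have "F' \<sigma> \<le> F' \<tau>" using assms(2,4) \<rho>(2) \<tau>(2) \<open>\<tau> \<in> pow X\<close>
    unfolding filtration_def by blast
  ultimately show ?thesis by linarith
qed

lemma D_props:
  assumes "finite X"
  shows "0 \<le> d_I_filtration X F F'" "\<And>\<sigma>. \<sigma> \<in> pow X \<Longrightarrow> \<bar>F \<sigma> - F' \<sigma>\<bar> \<le> d_I_filtration X F F'"
  using finite_pow[OF assms] unfolding d_I_filtration_def by auto

lemma D_le:
  assumes "finite X" "0 \<le> e" "\<And>\<sigma>. \<sigma> \<in> pow X \<Longrightarrow> \<bar>F \<sigma> - F' \<sigma>\<bar> \<le> e"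
  shows "d_I_filtration X F F' \<le> e"
  using finite_pow[OF assms(1)] assms(2,3) unfolding d_I_filtration_def by auto

lemma part3:
  assumes "finite X" "filtration X F" "filtration X F'"
  shows "d_I_facegram (facegram X F) (facegram X F') = ereal (d_I_filtration X F F')"
proof -
  let ?D = "d_I_filtration X F F'"
  let ?S = "{ereal \<epsilon> | \<epsilon>. \<epsilon> \<ge> 0 \<and>
      (\<forall>t. faceset_le (facegram X F t) (facegram X F' (t + \<epsilon>)) \<and> faceset_le (facegram X F' t) (facegram X F (t + \<epsilon>)))}"
  have "ereal ?D \<in> ?S"
  proof -
    have h: "\<bar>F \<sigma> - F' \<sigma>\<bar> \<le> ?D" if "\<sigma> \<in> pow X" for \<sigma>
      using D_props(2)[OF assms(1) that] .
    have "\<forall>\<sigma>\<in>pow X. F' \<sigma> \<le> F \<sigma> + ?D" "\<forall>\<sigma>\<in>pow X. F \<sigma> \<le> F' \<sigma> + ?D"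
    proof -
      show "\<forall>\<sigma>\<in>pow X. F' \<sigma> \<le> F \<sigma> + ?D"
      proof
        fix \<sigma> assume "\<sigma> \<in> pow X"
        from h[OF this] show "F' \<sigma> \<le> F \<sigma> + ?D" unfolding abs_le_iff by linarith
      qed
      show "\<forall>\<sigma>\<in>pow X. F \<sigma> \<le> F' \<sigma> + ?D"
      proof
        fix \<sigma> assume "\<sigma> \<in> pow X"
        from h[OF this] show "F \<sigma> \<le> F' \<sigma> + ?D" unfolding abs_le_iff by linarith
      qed
    qed
    note q = this
    have "\<forall>t. faceset_le (facegram X F t) (facegram X F' (t + ?D)) \<and> faceset_le (facegram X F' t) (facegram X F (t + ?D))"
      using interl_half[OF assms(1) q(1)] interl_half[OF assms(1) q(2)] by simp
    then show ?thesis using D_props(1)[OF assms(1), where F=F and F'=F'] by simp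
  qed
  moreover have "ereal ?D \<le> s" if "s \<in> ?S" for s
  proof -
    from that obtain e where e: "s = ereal e" "e \<ge> 0"
      "\<forall>t. faceset_le (facegram X F t) (facegram X F' (t + e))"
      "\<forall>t. faceset_le (facegram X F' t) (facegram X F (t + e))" by blast
    have "\<bar>F \<sigma> - F' \<sigma>\<bar> \<le> e" if "\<sigma> \<in> pow X" for \<sigma>
      using interl_half_conv[OF assms(1,3) e(3) that] interl_half_conv[OF assms(1,2) e(4) that]
      by (simp add: abs_le_iff)
    then show ?thesis using D_le[OF assms(1) e(2)] e(1) by auto
  qed
  ultimately show ?thesis unfolding d_I_facegram_def
    by (meson Inf_greatest Inf_lower antisym)
qed

lemma to_interval_fin: "a < m \<Longrightarrow> to_interval {a..<m} = (a, ereal m)"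
  unfolding to_interval_def by (simp add: cInf_atLeastLessThan cSup_atLeastLessThan)

lemma not_bdd_atLeast: "\<not> bdd_above {a::real..}"
proof
  assume "bdd_above {a..}"
  then obtain M where "\<forall>x\<in>{a..}. x \<le> M" unfolding bdd_above_def by auto
  then have "max a M + 1 \<le> M" by (metis atLeast_iff le_add_same_cancel1 max.cobounded1 order_trans zero_le_one)
  then show False by linarith
qed

lemma to_interval_inf: "to_interval {a..} = (a, \<infinity>)"
  unfolding to_interval_def using not_bdd_atLeast by (simp add: cInf_atLeast)

lemma match_fin:
  assumes "\<bar>a - a'\<bar> \<le> D" "\<bar>m - m'\<bar> \<le> D" "0 \<le> D"
  shows "\<exists>M. eps_matching D (if {a..<m} = {} then {#} else {#to_interval {a..<m}#})
                             (if {a'..<m'} = {} then {#} else {#to_interval {a'..<m'}#}) M"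
proof (cases "a < m"; cases "a' < m'")
  assume h: "a < m" "a' < m'"
  show ?thesis using h assms
    by (intro exI[of _ "{#((a, ereal m), (a', ereal m'))#}"])
       (simp add: eps_matching_def to_interval_fin end_dist_def)
next
  assume h: "a < m" "\<not> a' < m'"
  have "m - a \<le> 2 * D" using h assms by (simp add: abs_le_iff)
  then show ?thesis using h assms
    by (intro exI[of _ "{#}"]) (simp add: eps_matching_def to_interval_fin)
next
  assume h: "\<not> a < m" "a' < m'"
  have "m' - a' \<le> 2 * D" using h assms by (simp add: abs_le_iff)
  then show ?thesis using h assms
    by (intro exI[of _ "{#}"]) (simp add: eps_matching_def to_interval_fin)
next
  assume h: "\<not> a < m" "\<not> a' < m'"
  then show ?thesis by (intro exI[of _ "{#}"]) (simp add: eps_matching_def)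
qed

lemma match_inf:
  assumes "\<bar>a - a'\<bar> \<le> D" "0 \<le> D"
  shows "\<exists>M. eps_matching D (if {a..} = {} then {#} else {#to_interval {a..}#})
                             (if {a'..} = {} then {#} else {#to_interval {a'..}#}) M"
  using assms
  by (intro exI[of _ "{#((a, \<infinity>), (a', \<infinity>))#}"])
     (simp add: eps_matching_def to_interval_inf end_dist_def)

lemma lifespan_char:
  "\<sigma> \<in> pow X \<Longrightarrow> lifespan (facegram X F) \<sigma> = {t. F \<sigma> \<le> t \<and> (\<forall>\<tau>\<in>{\<tau>\<in>pow X. \<sigma> \<subset> \<tau>}. t < F \<tau>)}"
  unfolding lifespan_def facegram_def by auto

lemma lifespan_fin:
  assumes "finite X" "\<sigma> \<in> pow X" "{\<tau>\<in>pow X. \<sigma> \<subset> \<tau>} \<noteq> {}"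
  shows "lifespan (facegram X F) \<sigma> = {F \<sigma>..<Min (F ` {\<tau>\<in>pow X. \<sigma> \<subset> \<tau>})}"
proof -
  have f: "finite (F ` {\<tau>\<in>pow X. \<sigma> \<subset> \<tau>})" using finite_pow[OF assms(1)] by auto
  show ?thesis unfolding lifespan_char[OF assms(2)]
    using Min_gr_iff[OF f] assms(3) by auto
qed

lemma lifespan_top:
  assumes "\<sigma> \<in> pow X" "{\<tau>\<in>pow X. \<sigma> \<subset> \<tau>} = {}"
  shows "lifespan (facegram X F) \<sigma> = {F \<sigma>..}"
  unfolding lifespan_char[OF assms(1)] using assms(2) by auto

lemma Min_diff:
  fixes F F' :: "'b \<Rightarrow> real"
  assumes "finite T" "T \<noteq> {}" "\<forall>\<tau>\<in>T. \<bar>F \<tau> - F' \<tau>\<bar> \<le> D"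
  shows "\<bar>Min (F ` T) - Min (F' ` T)\<bar> \<le> D"
proof -
  have "Min (F ` T) \<in> F ` T" "Min (F' ` T) \<in> F' ` T" using assms(1,2) by (intro Min_in; simp)+
  then obtain t1 t2 where t1: "t1 \<in> T" "F t1 = Min (F ` T)" and t2: "t2 \<in> T" "F' t2 = Min (F' ` T)"
    by (metis imageE)
  have "Min (F ` T) \<le> F t2" "Min (F' ` T) \<le> F' t1" using t1 t2 assms(1) by auto
  then show ?thesis using t1 t2 assms(3) by (smt (verit))
qed

lemma part2_sigma:
  assumes "finite X" "\<sigma> \<in> pow X"
  shows "bottleneck (lifespan_mset (facegram X F) \<sigma>) (lifespan_mset (facegram X F') \<sigma>)
          \<le> ereal (d_I_filtration X F F')"
proof -
  let ?D = "d_I_filtration X F F'"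
  let ?T = "{\<tau>\<in>pow X. \<sigma> \<subset> \<tau>}"
  have D0: "0 \<le> ?D" and Dle: "\<And>\<sigma>. \<sigma> \<in> pow X \<Longrightarrow> \<bar>F \<sigma> - F' \<sigma>\<bar> \<le> ?D"
    using D_props[OF assms(1)] by auto
  have "\<exists>M. eps_matching ?D (lifespan_mset (facegram X F) \<sigma>) (lifespan_mset (facegram X F') \<sigma>) M"
  proof (cases "?T = {}")
    case True
    show ?thesis unfolding lifespan_mset_def lifespan_top[OF assms(2) True]
      using match_inf[OF Dle[OF assms(2)] D0] .
  next
    case False
    have "\<bar>Min (F ` ?T) - Min (F' ` ?T)\<bar> \<le> ?D"
      using Min_diff[of ?T F F' ?D] finite_pow[OF assms(1)] False Dle by auto
    then show ?thesis unfolding lifespan_mset_def lifespan_fin[OF assms(1,2) False]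
      using match_fin[OF Dle[OF assms(2)] _ D0] by blast
  qed
  then show ?thesis using bottleneck_le_match D0 by blast
qed

lemma part2:
  assumes "finite X"
  shows "d_inf_mgm_star X (facegram X F) (facegram X F') \<le> ereal (d_I_filtration X F F')"
  unfolding d_inf_mgm_star_def
  using part2_sigma[OF assms] D_props(1)[OF assms, of F F'] by (auto intro!: Sup_least)

lemma part1:
  assumes "finite X"
  shows "bottleneck (mgm X F) (mgm X F') \<le> d_inf_mgm_star X (facegram X F) (facegram X F')"
proof -
  let ?d = "d_inf_mgm_star X (facegram X F) (facegram X F')"
  have d0: "0 \<le> ?d" unfolding d_inf_mgm_star_def by (auto intro: Sup_upper)
  have bs: "bottleneck (lifespan_mset (facegram X F) \<sigma>) (lifespan_mset (facegram X F') \<sigma>) \<le> ?d"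
    if "\<sigma> \<in> pow X" for \<sigma>
    unfolding d_inf_mgm_star_def by (rule Sup_upper) (use that in auto)
  show ?thesis
  proof (rule bottleneck_le[OF d0])
    fix e assume e: "?d < ereal e"
    have "\<forall>\<sigma>\<in>pow X. \<exists>M. eps_matching e (lifespan_mset (facegram X F) \<sigma>) (lifespan_mset (facegram X F') \<sigma>) M"
    proof
      fix \<sigma> assume "\<sigma> \<in> pow X"
      have "bottleneck (lifespan_mset (facegram X F) \<sigma>) (lifespan_mset (facegram X F') \<sigma>) < ereal e"
        using bs[OF \<open>\<sigma> \<in> pow X\<close>] e by (rule le_less_trans)
      then show "\<exists>M. eps_matching e (lifespan_mset (facegram X F) \<sigma>) (lifespan_mset (facegram X F') \<sigma>) M"
        by (rule bottleneck_less)
    qed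
    from bchoice[OF this] obtain M where
      M: "\<forall>\<sigma>\<in>pow X. eps_matching e (lifespan_mset (facegram X F) \<sigma>) (lifespan_mset (facegram X F') \<sigma>) (M \<sigma>)"
      by blast
    have "eps_matching e (mgm X F) (mgm X F') (\<Sum>\<sigma>\<in>pow X. M \<sigma>)"
      unfolding mgm_sum[OF assms] by (rule eps_matching_sum[OF finite_pow[OF assms] M])
    then show "\<exists>M. eps_matching e (mgm X F) (mgm X F') M" by (rule exI)
  qed
qed

theorem mainTheorem15:
  fixes X :: "'a set" and F F' :: "'a set \<Rightarrow> real"
  assumes "finite X"
    and "filtration X F" and "filtration X F'"
  shows "bottleneck (mgm X F) (mgm X F') \<le> d_inf_mgm_star X (facegram X F) (facegram X F')
       \<and> d_inf_mgm_star X (facegram X F) (facegram X F') \<le> d_I_facegram (facegram X F) (facegram X F')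
       \<and> d_I_facegram (facegram X F) (facegram X F') = ereal (d_I_filtration X F F')"
proof (intro conjI)
  show "bottleneck (mgm X F) (mgm X F') \<le> d_inf_mgm_star X (facegram X F) (facegram X F')"
    by (rule part1[OF assms(1)])
  show "d_inf_mgm_star X (facegram X F) (facegram X F') \<le> d_I_facegram (facegram X F) (facegram X F')"
    unfolding part3[OF assms] by (rule part2[OF assms(1)])
  show "d_I_facegram (facegram X F) (facegram X F') = ereal (d_I_filtration X F F')"
    by (rule part3[OF assms])
qed

end
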